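(* For the deterministic system described in the context, the recurrence time $\zeta_n$ is finite for all sufficiently large $n$ and \[ \lim_{n\to\infty}\frac{\zeta_n}{\log n}=\frac{\min\{1-\beta,\alpha\}}{\lambda_1}. \]
   Context: Fix constants $r_0,d_0\ge 0$ with $\lambda_0:=r_0-d_0<0$, $d_1>0$, $k>1$, $\alpha\in(0,1)$, $\beta\in(0,1)$. Let $f:[0,\infty)^2\to[0,\infty)$ satisfy: (A1) $f$ is Lipschitz continuous; (A2) $f(x,y)=r_1$ when $x+y=0$ and $f(x,y)=d_1$ when $x+y=1$, where $r_1:=f(0,0)>d_1$; (A3) $f(x,y)=\Phi(x+y)$ for some non-increasing function $\Phi:[0,\infty)\to[0,\infty)$; (A4) $f(x,y)\to0$ as $x\to\infty$ and as $y\to\infty$; (A5) $f(x,y)\ge \lambda_1(1-(x+y))+d_1$ for all $x,y\ge0$, where $\lambda_1:=r_1-d_1>0$. Put $\phi(x,y):=f(x,y)-d_1$. For each integer $n\ge1$ let $K=K(n):=kn$ and let $(y_0,y_1,y_\beta)$ solve \[ \dot y_0=\lambda_0 y_0,\qquad \dot y_1=\phi(y_0,y_1)\,y_1+n^{-\alpha}y_0,\qquad \dot y_\beta=\phi(y_0,y_1)\,y_\beta, \] with $(y_0(0),y_1(0),y_\beta(0))=(n/K,\,n^\beta/K,\,n^\beta/K)$. Define the deterministic recurrence time $\zeta_n:=\inf\{t>0: y_1(t)=n/K\}$. *)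

theory Defs
  imports "HOL-Analysis.Analysis"
begin

definition recurrence_time :: "(real \<Rightarrow> real) \<Rightarrow> real \<Rightarrow> real" where
  "recurrence_time y c = Inf {t. t > 0 \<and> y t = c}"

end

theory Submission
  imports Defs
begin


lemma deriv_mono0:
  fixes g g' :: "real \<Rightarrow> real"
  assumes ab: "0 \<le> a" "a \<le> b"
    and d: "\<And>t. t \<ge> 0 \<Longrightarrow> (g has_real_derivative g' t) (at t within {0..})"
    and nn: "\<And>t. a \<le> t \<Longrightarrow> t \<le> b \<Longrightarrow> g' t \<ge> 0"
  shows "g a \<le> g b"
proof -
  have "\<And>x. a \<le> x \<Longrightarrow> x \<le> b \<Longrightarrow> (g has_derivative (\<lambda>h. g' x * h)) (at x within {a..b})"
  proof -
    fix x assume "a \<le> x" "x \<le> b"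
    then have d': "(g has_real_derivative g' x) (at x within {0..})" using d ab by simp
    have "(g has_real_derivative g' x) (at x within {a..b})"
      by (rule DERIV_subset[OF d']) (use ab in auto)
    then show "(g has_derivative (\<lambda>h. g' x * h)) (at x within {a..b})"
      by (simp add: has_field_derivative_def)
  qed
  then obtain x where x: "x \<in> {a..b}" "g b - g a = g' x * (b - a)"
    using mvt_very_simple[of a b g "\<lambda>x h. g' x * h"] ab by blast
  have "g' x * (b - a) \<ge> 0" using nn[of x] x(1) ab by auto
  then show ?thesis using x by linarith
qed

lemma deriv_cont0:
  fixes g g' :: "real \<Rightarrow> real"
  assumes d: "\<And>t. t \<ge> 0 \<Longrightarrow> (g has_real_derivative g' t) (at t within {0..})"
  shows "continuous_on {0..} g"
proof (subst continuous_on_eq_continuous_within, intro ballI)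
  fix t :: real assume "t \<in> {0..}"
  then have "(g has_real_derivative g' t) (at t within {0..})" using d by simp
  then show "continuous (at t within {0..}) g" by (rule DERIV_continuous)
qed

lemma stays_pos:
  fixes g :: "real \<Rightarrow> real"
  assumes cont: "continuous_on {0..} g" and g0: "g 0 > 0"
    and step: "\<And>t. t > 0 \<Longrightarrow> (\<And>s. 0 \<le> s \<Longrightarrow> s \<le> t \<Longrightarrow> g s \<ge> 0) \<Longrightarrow> g t > 0"
    and t: "t \<ge> 0"
  shows "g t > 0"
proof (rule ccontr)
  assume nt: "\<not> g t > 0"
  have zero: "\<exists>z. 0 \<le> z \<and> z \<le> r \<and> g z = 0" if "0 \<le> r" "g r \<le> 0" for r
    using IVT2'[of g r 0 0] that g0 continuous_on_subset[OF cont, of "{0..r}"] by auto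
  let ?S = "{0..} \<inter> g -` {0}"
  have cl: "closed ?S" by (rule continuous_closed_preimage[OF cont]) auto
  have ne: "?S \<noteq> {}" using zero[of t] t nt by auto
  have bdd: "bdd_below ?S" by (rule bdd_belowI[of _ 0]) auto
  define s where "s = Inf ?S"
  have sS: "s \<in> ?S" using closed_contains_Inf[OF ne bdd cl] s_def by simp
  have s_pos: "s > 0" using sS g0 by (cases "s = 0") auto
  have "g s > 0"
  proof (rule step[OF s_pos])
    fix r assume r: "0 \<le> r" "r \<le> s"
    show "g r \<ge> 0"
    proof (rule ccontr)
      assume "\<not> g r \<ge> 0"
      then obtain z where z: "0 \<le> z" "z \<le> r" "g z = 0" using zero[of r] r by auto
      then have "z \<in> ?S" by auto
      then have "s \<le> z" unfolding s_def using bdd by (rule cInf_lower)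
      then have "z = s" "r = s" using z r by auto
      then show False using sS \<open>\<not> g r \<ge> 0\<close> by auto
    qed
  qed
  then show False using sS by auto
qed

lemma deriv_mult_exp:
  fixes g P :: "real \<Rightarrow> real"
  assumes "(g has_real_derivative g') (at s within S)" "(P has_real_derivative p) (at s within S)"
  shows "((\<lambda>s. g s * exp (P s)) has_real_derivative (g' + g s * p) * exp (P s)) (at s within S)"
proof -
  have e: "((\<lambda>s. exp (P s)) has_real_derivative exp (P s) * p) (at s within S)"
    by (rule DERIV_chain2[OF DERIV_exp assms(2)])
  have "((\<lambda>s. g s * exp (P s)) has_real_derivative (g s * (exp (P s) * p) + g' * exp (P s))) (at s within S)"
    by (rule DERIV_mult'[OF assms(1) e])
  then show ?thesis by (simp add: algebra_simps)
qed

lemma deriv_lin: "((\<lambda>s::real. c * s) has_real_derivative c) (at s within S)"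
  using DERIV_cmult[OF DERIV_ident, of c s S] by simp



locale sys =
  fixes l0 d1 k lam a b :: real and f :: "real\<Rightarrow>real\<Rightarrow>real" and v u :: "real\<Rightarrow>real"
  assumes l0: "l0 < 0" and d1: "d1 > 0" and k: "k > 1" and lam: "lam > 0"
  and a: "a > 0" and b: "b > 0" "b < 1/k"
  and fnn: "\<And>x y. x\<ge>0 \<Longrightarrow> y\<ge>0 \<Longrightarrow> f x y \<ge> 0"
  and fmax: "\<And>x y. x\<ge>0 \<Longrightarrow> y\<ge>0 \<Longrightarrow> f x y - d1 \<le> lam"
  and A5: "\<And>x y. x\<ge>0 \<Longrightarrow> y\<ge>0 \<Longrightarrow> f x y - d1 \<ge> lam * (1-(x+y))"
  and dv: "\<And>t. t\<ge>0 \<Longrightarrow> (v has_real_derivative l0 * v t) (at t within {0..})"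
  and du: "\<And>t. t\<ge>0 \<Longrightarrow> (u has_real_derivative (f (v t) (u t) - d1) * u t + a * v t) (at t within {0..})"
  and v0: "v 0 = 1/k" and u0: "u 0 = b"
begin

lemma v_eq: assumes t: "t\<ge>0" shows "v t = exp(l0 * t)/k"
proof -
  have D: "((\<lambda>s. v s * exp(- l0 * s)) has_real_derivative (l0 * v s + v s * (- l0)) * exp(- l0 * s)) (at s within {0..})" if "s\<ge>0" for s
    by (rule deriv_mult_exp[OF dv[OF that] deriv_lin])
  have D2: "((\<lambda>s. - (v s * exp(- l0 * s))) has_real_derivative - ((l0 * v s + v s * (- l0)) * exp(- l0 * s))) (at s within {0..})" if "s\<ge>0" for s
    using D[OF that] by (rule DERIV_minus)
  have "v 0 * exp(- l0 * 0) \<le> v t * exp(- l0 * t)"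
    by (rule deriv_mono0[OF _ t D]) auto
  moreover have "- (v 0 * exp(- l0 * 0)) \<le> - (v t * exp(- l0 * t))"
    by (rule deriv_mono0[OF _ t D2]) auto
  ultimately have "v t * exp(- l0 * t) = 1/k" using v0 by simp
  then show ?thesis by (simp add: exp_minus field_simps)
qed

lemma v_pos: "t \<ge> 0 \<Longrightarrow> v t > 0" using v_eq k by simp

lemma v_le: assumes "t \<ge> 0" shows "v t \<le> 1/k"
proof -
  have "exp(l0 * t) \<le> 1" using assms l0 by (simp add: mult_nonpos_nonneg)
  then show ?thesis using v_eq[OF assms] k by (simp add: divide_right_mono)
qed

lemma u_pos: assumes t: "t \<ge> 0" shows "u t > 0"
proof (rule stays_pos[OF deriv_cont0[OF du] _ _ t])
  show "0 < u 0" using u0 b by simp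
next
  fix t :: real assume t: "t > 0" and nn: "\<And>s. 0 \<le> s \<Longrightarrow> s \<le> t \<Longrightarrow> u s \<ge> 0"
  have D: "((\<lambda>s. u s * exp(d1 * s)) has_real_derivative
     (((f (v s) (u s) - d1) * u s + a * v s) + u s * d1) * exp(d1 * s)) (at s within {0..})"
    if "s \<ge> 0" for s
    by (rule deriv_mult_exp[OF du[OF that] deriv_lin])
  have "u 0 * exp(d1 * 0) \<le> u t * exp(d1 * t)"
  proof (rule deriv_mono0[OF _ _ D])
    fix s assume s: "0 \<le> s" "s \<le> t"
    have "(((f (v s) (u s) - d1) * u s + a * v s) + u s * d1) * exp(d1 * s)
        = (f (v s) (u s) * u s + a * v s) * exp(d1 * s)" by (simp add: algebra_simps)
    also have "\<dots> \<ge> 0" using fnn[of "v s" "u s"] nn[OF s] v_pos[of s] a s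
      by (intro mult_nonneg_nonneg add_nonneg_nonneg) auto
    finally show "0 \<le> (((f (v s) (u s) - d1) * u s + a * v s) + u s * d1) * exp(d1 * s)" .
  qed (use t in auto)
  then have "0 < u t * exp(d1 * t)" using u0 b by simp
  then show "0 < u t" by (simp add: zero_less_mult_iff)
qed

lemma phi_le: "t\<ge>0 \<Longrightarrow> f (v t) (u t) - d1 \<le> lam"
  by (rule fmax[OF less_imp_le[OF v_pos] less_imp_le[OF u_pos]])
lemma phi_ge: "t\<ge>0 \<Longrightarrow> f (v t) (u t) - d1 \<ge> lam * (1 - (v t + u t))"
  by (rule A5[OF less_imp_le[OF v_pos] less_imp_le[OF u_pos]])

definition "B = b + a/(k * lam)"

lemma B_pos: "B > 0" using a b k lam by (simp add: B_def add_pos_pos)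

lemma u_upper: assumes t: "t \<ge> 0" shows "u t \<le> B * exp(lam * t)"
proof -
  let ?c = "a/(k * lam)"
  let ?X = "\<lambda>s. ((f (v s) (u s) - d1) * u s + a * v s) + (u s + ?c) * (- lam)"
  have D: "((\<lambda>s. - ((u s + ?c) * exp (- lam * s))) has_real_derivative - (?X s * exp(- lam * s))) (at s within {0..})"
    if "s \<ge> 0" for s
  proof -
    have w: "((\<lambda>s. u s + ?c) has_real_derivative ((f (v s) (u s) - d1) * u s + a * v s)) (at s within {0..})"
      using DERIV_add[OF du[OF that] DERIV_const[of ?c]] by simp
    show ?thesis using deriv_mult_exp[OF w deriv_lin] by (rule DERIV_minus)
  qed
  have "- ((u 0 + ?c) * exp (- lam * 0)) \<le> - ((u t + ?c) * exp (- lam * t))"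
  proof (rule deriv_mono0[OF _ t D])
    fix s assume s: "0 \<le> s" "s \<le> t"
    have "?X s = (f (v s) (u s) - d1 - lam) * u s + a * (v s - 1/k)"
      using lam k by (simp add: field_simps)
    also have "\<dots> \<le> 0" using phi_le[of s] u_pos[of s] v_le[of s] a s
      by (intro add_nonpos_nonpos mult_nonpos_nonneg mult_nonneg_nonpos) auto
    finally have "?X s \<le> 0" .
    then show "0 \<le> - (?X s * exp(- lam * s))" by (simp add: mult_nonpos_nonneg)
  qed simp
  then have "(u t + ?c) * exp (- lam * t) \<le> B" using u0 by (simp add: B_def)
  moreover have "?c * exp (- lam * t) \<ge> 0" using a k lam by simp
  ultimately have "u t * exp (- lam * t) \<le> B" by (simp add: algebra_simps)
  then have "u t * exp (- lam * t) * exp (lam * t) \<le> B * exp (lam * t)" by (simp add: mult_right_mono)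
  moreover have "u t * exp (- lam * t) * exp (lam * t) = u t" by (simp add: exp_minus)
  ultimately show ?thesis by linarith
qed

lemma hit_lower: assumes t: "t \<ge> 0" and h: "u t = 1/k" shows "t \<ge> ln (1/(k * B)) / lam"
proof -
  have "1/k \<le> B * exp(lam * t)" using u_upper[OF t] h by simp
  then have "1/(k * B) \<le> exp(lam * t)" using B_pos k by (simp add: field_simps)
  then have "ln (1/(k * B)) \<le> lam * t" using B_pos k ln_le_cancel_iff[of "1/(k * B)" "exp(lam * t)"] by simp
  then show ?thesis using lam by (simp add: divide_le_eq mult.commute)
qed

lemma u_one: "u 1 \<ge> (b + a * exp l0 / k) * exp(- d1)"
proof -
  let ?g = "\<lambda>s. u s * exp(d1 * s) - a * exp l0 / k * s"
  let ?X = "\<lambda>s. (((f (v s) (u s) - d1) * u s + a * v s) + u s * d1) * exp(d1 * s)"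
  have D: "(?g has_real_derivative ?X s - a * exp l0 / k) (at s within {0..})" if "s \<ge> 0" for s
  proof -
    have D1: "((\<lambda>s. u s * exp(d1 * s)) has_real_derivative ?X s) (at s within {0..})"
      by (rule deriv_mult_exp[OF du[OF that] deriv_lin])
    show ?thesis by (rule DERIV_diff[OF D1 deriv_lin])
  qed
  have "?g 0 \<le> ?g 1"
  proof (rule deriv_mono0[OF _ _ D])
    fix s :: real assume s: "0 \<le> s" "s \<le> 1"
    have e1: "exp(d1 * s) \<ge> 1" using d1 s by simp
    have "l0 * s \<ge> l0" using l0 s by (simp add: mult_le_cancel_left_neg[of l0 s 1, simplified] mult_le_cancel_left1)
    then have "exp l0 \<le> exp(l0 * s)" by simp
    then have vs: "v s \<ge> exp l0 / k" using v_eq[of s] s k by (simp add: divide_right_mono)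
    have "?X s = f (v s) (u s) * u s * exp(d1 * s) + a * (v s * exp(d1 * s))" by (simp add: algebra_simps)
    moreover have "f (v s) (u s) * u s * exp(d1 * s) \<ge> 0" using fnn[of "v s" "u s"] u_pos[of s] v_pos[of s] s by simp
    moreover have "v s * exp(d1 * s) \<ge> exp l0 / k"
    proof -
      have "v s * exp(d1 * s) \<ge> v s * 1" using e1 v_pos[of s] s by (intro mult_left_mono) auto
      then show ?thesis using vs by simp
    qed
    then have "a * (v s * exp(d1 * s)) \<ge> a * (exp l0 / k)" using a by (intro mult_left_mono) auto
    ultimately show "0 \<le> ?X s - a * exp l0 / k" by simp
  qed auto
  then have "b \<le> u 1 * exp d1 - a * exp l0 / k" using u0 by simp
  then have "(b + a * exp l0 / k) * exp (- d1) \<le> (u 1 * exp d1) * exp(- d1)" by (intro mult_right_mono) auto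
  also have "\<dots> = u 1" by (simp add: mult.assoc exp_add[symmetric])
  finally show ?thesis .
qed

definition "Psi s = lam * s - (lam / (k * l0)) * (exp(l0 * s) - 1) - B * (exp(lam * s) - 1)"
definition "psi s = lam - lam * exp(l0 * s) / k - B * lam * exp(lam * s)"

lemma Psi_deriv: "(Psi has_real_derivative psi s) (at s within S)"
proof -
  have e1: "((\<lambda>s. exp(l0 * s)) has_real_derivative exp(l0 * s) * l0) (at s within S)"
    by (rule DERIV_chain2[OF DERIV_exp deriv_lin])
  have e2: "((\<lambda>s. exp(lam * s)) has_real_derivative exp(lam * s) * lam) (at s within S)"
    by (rule DERIV_chain2[OF DERIV_exp deriv_lin])
  have "((\<lambda>s. lam * s - (lam / (k * l0)) * (exp(l0 * s) - 1) - B * (exp(lam * s) - 1)) has_real_derivative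
     lam - (lam / (k * l0)) * (exp(l0 * s) * l0 - 0) - B * (exp(lam * s) * lam - 0)) (at s within S)"
    by (intro DERIV_diff deriv_lin DERIV_cmult e1 e2 DERIV_const)
  moreover have "lam - (lam / (k * l0)) * (exp(l0 * s) * l0 - 0) - B * (exp(lam * s) * lam - 0) = psi s"
    using l0 k by (simp add: psi_def field_simps)
  ultimately show ?thesis unfolding Psi_def[abs_def] by simp
qed

lemma u_lower: assumes t: "t \<ge> 1" shows "u t \<ge> u 1 * exp(Psi t - Psi 1)"
proof -
  let ?X = "\<lambda>s. ((f (v s) (u s) - d1) * u s + a * v s) + u s * (- psi s)"
  have D: "((\<lambda>s. u s * exp(- Psi s)) has_real_derivative ?X s * exp(- Psi s)) (at s within {0..})"
    if "s \<ge> 0" for s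
    using deriv_mult_exp[OF du[OF that] DERIV_minus[OF Psi_deriv]] by simp
  have "u 1 * exp(- Psi 1) \<le> u t * exp(- Psi t)"
  proof (rule deriv_mono0[OF _ t D])
    fix s :: real assume s: "1 \<le> s" "s \<le> t"
    have "psi s = lam * (1 - (v s + B * exp(lam * s)))" using v_eq[of s] s by (simp add: psi_def algebra_simps)
    also have "\<dots> \<le> lam * (1 - (v s + u s))" using u_upper[of s] s lam by (intro mult_left_mono) auto
    also have "\<dots> \<le> f (v s) (u s) - d1" using phi_ge[of s] s by simp
    finally have "psi s \<le> f (v s) (u s) - d1" .
    then have "(f (v s) (u s) - d1 - psi s) * u s \<ge> 0" using u_pos[of s] s by simp
    moreover have "a * v s \<ge> 0" using a v_pos[of s] s by simp
    ultimately have "?X s \<ge> 0" by (simp add: algebra_simps)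
    then show "0 \<le> ?X s * exp(- Psi s)" by simp
  qed simp
  then have "u 1 * exp(- Psi 1) * exp(Psi t) \<le> u t * exp(- Psi t) * exp(Psi t)" by (intro mult_right_mono) auto
  moreover have "u t * exp(- Psi t) * exp(Psi t) = u t" by (simp add: mult.assoc exp_add[symmetric])
  moreover have "u 1 * exp(- Psi 1) * exp(Psi t) = u 1 * exp(Psi t - Psi 1)" by (simp add: mult.assoc exp_add[symmetric])
  ultimately show ?thesis by simp
qed

definition "C = lam / (k * (- l0))"

lemma Psi_diff: assumes T: "B * exp(lam * T) = 1" shows "Psi T - Psi 1 \<ge> lam * T - lam - C - 1"
proof -
  have eq: "Psi T - Psi 1 = lam * T - lam + C * (exp(l0 * T) - exp l0) - B * exp(lam * T) + B * exp lam"
    using l0 k by (simp add: Psi_def C_def field_simps)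
  have Cpos: "C > 0" unfolding C_def by (rule divide_pos_pos[OF lam]) (use k l0 mult_pos_neg[of k l0] in simp)
  have "exp l0 \<le> 1" using l0 by simp
  then have "exp(l0 * T) - exp l0 \<ge> -1" using exp_gt_zero[of "l0 * T"] by linarith
  then have "C * (exp(l0 * T) - exp l0) \<ge> C * (-1)" using Cpos by (intro mult_left_mono) auto
  moreover have "B * exp lam \<ge> 0" using B_pos by simp
  ultimately show ?thesis using eq T by simp
qed

definition "m = exp(- d1) * min 1 (lam * exp l0) * exp(- lam - C - 1)"

lemma m_pos: "m > 0" using lam by (simp add: m_def)

lemma at_T1: assumes T: "1 \<le> T" "B * exp(lam * T) = 1" shows "u T \<ge> m"
proof -
  let ?c2 = "min 1 (lam * exp l0)"
  have c2: "b + a * exp l0 / k \<ge> ?c2 * B"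
  proof -
    have "?c2 * b \<le> 1 * b" using b by (intro mult_right_mono) auto
    moreover have "?c2 * (a / (k * lam)) \<le> (lam * exp l0) * (a / (k * lam))" using a k lam
      by (intro mult_right_mono) auto
    moreover have "(lam * exp l0) * (a / (k * lam)) = a * exp l0 / k" using lam by simp
    ultimately show ?thesis by (simp add: B_def algebra_simps)
  qed
  have "u T \<ge> u 1 * exp(Psi T - Psi 1)" using u_lower T by simp
  have h2: "exp(Psi T - Psi 1) \<ge> exp(lam * T - lam - C - 1)" using Psi_diff[OF T(2)] by simp
  have h3: "exp(lam * T - lam - C - 1) = exp(- lam - C - 1) / B"
  proof -
    have "exp(lam * T - lam - C - 1) = exp(lam * T) * exp(- lam - C - 1)" by (simp add: exp_add[symmetric])
    also have "exp(lam * T) = 1 / B" using T(2) B_pos by (simp add: field_simps)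
    finally show ?thesis by simp
  qed
  have h4: "u 1 \<ge> ?c2 * B * exp(- d1)"
    using u_one c2 by (meson exp_ge_zero mult_right_mono order_trans)
  have u1: "u 1 \<ge> 0" using u_pos[of 1] by simp
  have "?c2 * B * exp(- d1) * (exp(- lam - C - 1) / B) \<le> u 1 * (exp(- lam - C - 1) / B)"
    using h4 B_pos by (intro mult_right_mono) auto
  also have "\<dots> = u 1 * exp(lam * T - lam - C - 1)" using h3 by simp
  also have "\<dots> \<le> u 1 * exp(Psi T - Psi 1)" using h2 u1 by (intro mult_left_mono) auto
  also have "\<dots> \<le> u T" using u_lower T by simp
  finally have "u T \<ge> ?c2 * B * exp(- d1) * (exp(- lam - C - 1) / B)" .
  also have "?c2 * B * exp(- d1) * (exp(- lam - C - 1) / B) = m" using B_pos by (simp add: m_def)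
  finally show ?thesis .
qed

definition "rho = lam * (k - 1) / (2 * k)"

lemma phase2: assumes T: "0 \<le> T" "exp(l0 * T) \<le> (k-1)/2" and D: "0 \<le> Dd"
  and below: "\<And>s. T \<le> s \<Longrightarrow> s \<le> T + Dd \<Longrightarrow> u s \<le> 1/k"
  shows "u (T + Dd) \<ge> u T * exp(rho * Dd)"
proof -
  let ?X = "\<lambda>s. ((f (v s) (u s) - d1) * u s + a * v s) + u s * (- rho)"
  have Dv: "((\<lambda>s. u s * exp(- rho * s)) has_real_derivative ?X s * exp(- rho * s)) (at s within {0..})"
    if "s \<ge> 0" for s
    by (rule deriv_mult_exp[OF du[OF that] deriv_lin])
  have "u T * exp(- rho * T) \<le> u (T + Dd) * exp(- rho * (T + Dd))"
  proof (rule deriv_mono0[OF T(1) _ Dv])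
    fix s :: real assume s: "T \<le> s" "s \<le> T + Dd"
    have s0: "s \<ge> 0" using s T by simp
    have "exp(l0 * s) \<le> exp(l0 * T)" using l0 s by (simp add: mult_le_cancel_left_neg)
    then have "v s \<le> exp(l0 * T) / k" using v_eq[OF s0] k by (simp add: divide_right_mono)
    also have "\<dots> \<le> ((k-1)/2) / k" by (rule divide_right_mono) (use T(2) k in auto)
    also have "\<dots> = (k-1)/(2 * k)" by simp
    finally have vs: "v s \<le> (k-1)/(2 * k)" .
    have e: "1 - ((k-1)/(2 * k) + 1/k) = (k-1)/(2 * k)" using k by (simp add: field_simps)
    have "1 - (v s + u s) \<ge> 1 - ((k-1)/(2 * k) + 1/k)" using vs below[OF s] by linarith
    then have "(k-1)/(2 * k) \<le> 1 - (v s + u s)" using e by simp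
    then have "lam * ((k-1)/(2 * k)) \<le> lam * (1 - (v s + u s))" using lam by (intro mult_left_mono) auto
    then have "rho \<le> lam * (1 - (v s + u s))" by (simp add: rho_def)
    also have "\<dots> \<le> f (v s) (u s) - d1" using phi_ge[OF s0] by simp
    finally have "(f (v s) (u s) - d1 - rho) * u s \<ge> 0" using u_pos[OF s0] by simp
    moreover have "a * v s \<ge> 0" using a v_pos[OF s0] by simp
    ultimately have "?X s \<ge> 0" by (simp add: algebra_simps)
    then show "0 \<le> ?X s * exp(- rho * s)" by simp
  qed (use D in simp)
  then have ineq: "u T * exp(- rho * T) * exp(rho * (T + Dd)) \<le> u (T + Dd) * exp(- rho * (T + Dd)) * exp(rho * (T + Dd))"
    by (intro mult_right_mono) auto
  have x1: "exp(- rho * (T + Dd)) * exp(rho * (T + Dd)) = 1" by (simp add: exp_minus)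
  have eqA: "u (T + Dd) * exp(- rho * (T + Dd)) * exp(rho * (T + Dd)) = u (T + Dd)"
    by (simp only: mult.assoc x1 mult_1_right)
  have "- rho * T + rho * (T + Dd) = rho * Dd" by (simp add: algebra_simps)
  then have x2: "exp(- rho * T) * exp(rho * (T + Dd)) = exp(rho * Dd)" by (metis exp_add)
  have eqB: "u T * exp(- rho * T) * exp(rho * (T + Dd)) = u T * exp(rho * Dd)"
    by (simp only: mult.assoc x2)
  show ?thesis using ineq unfolding eqA eqB .
qed


definition "Dc = max 0 (ln (1/(k * m)) / rho)"

lemma hit: assumes T1: "1 \<le> ln(1/B)/lam" "exp(l0 * (ln(1/B)/lam)) \<le> (k-1)/2"
  shows "\<exists>t>0. t \<le> ln(1/B)/lam + Dc \<and> u t = 1/k"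
proof -
  define T where "T = ln(1/B)/lam"
  have T1': "1 \<le> T" "exp(l0 * T) \<le> (k-1)/2" using T1 by (simp_all add: T_def)
  have BT: "B * exp(lam * T) = 1" using B_pos lam by (simp add: T_def)
  have uT: "u T \<ge> m" by (rule at_T1[OF T1'(1) BT])
  have rho_pos: "rho > 0" using lam k by (simp add: rho_def)
  have Dc0: "Dc \<ge> 0" by (simp add: Dc_def)
  have km: "k * m > 0" using k m_pos by simp
  obtain s where s: "0 \<le> s" "s \<le> T + Dc" "u s \<ge> 1/k"
  proof (cases "\<forall>s. T \<le> s \<longrightarrow> s \<le> T + Dc \<longrightarrow> u s \<le> 1/k")
    case True
    have "u (T + Dc) \<ge> u T * exp(rho * Dc)" using phase2[of T Dc] True T1' Dc0 by auto
    moreover have "u T * exp(rho * Dc) \<ge> m * exp(rho * Dc)" using uT by (intro mult_right_mono) auto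
    moreover have "m * exp(rho * Dc) \<ge> 1/k"
    proof -
      have "ln (1/(k * m)) / rho \<le> Dc" by (simp add: Dc_def)
      then have "ln (1/(k * m)) \<le> rho * Dc" using rho_pos by (simp add: divide_le_eq mult.commute)
      then have "exp (ln (1/(k * m))) \<le> exp(rho * Dc)" by simp
      then have "1/(k * m) \<le> exp(rho * Dc)" using km by simp
      then have "m * (1/(k * m)) \<le> m * exp(rho * Dc)" using m_pos by (intro mult_left_mono) auto
      then show ?thesis using m_pos k by simp
    qed
    ultimately have "1/k \<le> u (T + Dc)" by linarith
    then show ?thesis using that[of "T + Dc"] T1' Dc0 by auto
  next
    case False
    then obtain s where "T \<le> s" "s \<le> T + Dc" "\<not> u s \<le> 1/k" by auto
    then show ?thesis using that[of s] T1' by auto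
  qed
  have "\<exists>x. 0 \<le> x \<and> x \<le> s \<and> u x = 1/k"
    using IVT'[of u 0 "1/k" s] s u0 b continuous_on_subset[OF deriv_cont0[OF du], of "{0..s}"] by auto
  then obtain x where x: "0 \<le> x" "x \<le> s" "u x = 1/k" by blast
  have "x \<noteq> 0" using x u0 b by auto
  then show ?thesis using x s by (intro exI[of _ x]) (auto simp: T_def)
qed

lemma zeta_bounds:
  assumes "1 \<le> ln(1/B)/lam" "exp(l0 * (ln(1/B)/lam)) \<le> (k-1)/2"
  shows "{t. t>0 \<and> u t = 1/k} \<noteq> {} \<and> ln(1/(k * B))/lam \<le> Inf {t. t>0 \<and> u t = 1/k}
     \<and> Inf {t. t>0 \<and> u t = 1/k} \<le> ln(1/B)/lam + Dc"
proof -
  obtain t where t: "t > 0" "t \<le> ln(1/B)/lam + Dc" "u t = 1/k" using hit[OF assms] by blast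
  let ?H = "{t. t>0 \<and> u t = 1/k}"
  have ne: "?H \<noteq> {}" using t by auto
  have bdd: "bdd_below ?H" by (rule bdd_belowI[of _ 0]) auto
  have "Inf ?H \<le> t" using t bdd by (intro cInf_lower) auto
  moreover have "ln(1/(k * B))/lam \<le> Inf ?H" using ne hit_lower by (intro cInf_greatest) auto
  ultimately show ?thesis using ne t by auto
qed

end

theorem proposition3p1:
  fixes r0 d0 d1 k \<alpha> \<beta> :: real
    and f :: "real \<Rightarrow> real \<Rightarrow> real"
    and y0 y1 yb :: "nat \<Rightarrow> real \<Rightarrow> real"
  assumes r0: "r0 \<ge> 0" and d0: "d0 \<ge> 0" and lam0: "r0 - d0 < 0"
    and d1: "d1 > 0" and k: "k > 1"
    and alpha: "0 < \<alpha>" "\<alpha> < 1" and beta: "0 < \<beta>" "\<beta> < 1"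
    and f_nonneg: "\<And>x y. x \<ge> 0 \<Longrightarrow> y \<ge> 0 \<Longrightarrow> f x y \<ge> 0"
    and A1: "\<exists>L. L-lipschitz_on ({0..} \<times> {0..}) (\<lambda>(x, y). f x y)"
    and A2a: "f 0 0 > d1"
    and A2b: "\<And>x y. x \<ge> 0 \<Longrightarrow> y \<ge> 0 \<Longrightarrow> x + y = 1 \<Longrightarrow> f x y = d1"
    and A3: "\<exists>\<Phi> :: real \<Rightarrow> real. (\<forall>s t. 0 \<le> s \<longrightarrow> s \<le> t \<longrightarrow> \<Phi> t \<le> \<Phi> s)
               \<and> (\<forall>s. s \<ge> 0 \<longrightarrow> \<Phi> s \<ge> 0)
               \<and> (\<forall>x y. x \<ge> 0 \<longrightarrow> y \<ge> 0 \<longrightarrow> f x y = \<Phi> (x + y))"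
    and A4x: "\<And>y. y \<ge> 0 \<Longrightarrow> ((\<lambda>x. f x y) \<longlongrightarrow> 0) at_top"
    and A4y: "\<And>x. x \<ge> 0 \<Longrightarrow> ((\<lambda>y. f x y) \<longlongrightarrow> 0) at_top"
    and A5: "\<And>x y. x \<ge> 0 \<Longrightarrow> y \<ge> 0 \<Longrightarrow> f x y \<ge> (f 0 0 - d1) * (1 - (x + y)) + d1"
    and ode0: "\<And>n t. n \<ge> 1 \<Longrightarrow> t \<ge> 0 \<Longrightarrow>
                 (y0 n has_real_derivative (r0 - d0) * y0 n t) (at t within {0..})"
    and ode1: "\<And>n t. n \<ge> 1 \<Longrightarrow> t \<ge> 0 \<Longrightarrow>
                 (y1 n has_real_derivative
                    (f (y0 n t) (y1 n t) - d1) * y1 n t + real n powr (- \<alpha>) * y0 n t)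
                 (at t within {0..})"
    and odeb: "\<And>n t. n \<ge> 1 \<Longrightarrow> t \<ge> 0 \<Longrightarrow>
                 (yb n has_real_derivative (f (y0 n t) (y1 n t) - d1) * yb n t) (at t within {0..})"
    and init0: "\<And>n. n \<ge> 1 \<Longrightarrow> y0 n 0 = real n / (k * real n)"
    and init1: "\<And>n. n \<ge> 1 \<Longrightarrow> y1 n 0 = real n powr \<beta> / (k * real n)"
    and initb: "\<And>n. n \<ge> 1 \<Longrightarrow> yb n 0 = real n powr \<beta> / (k * real n)"
  shows "(\<forall>\<^sub>F n in sequentially. {t. t > 0 \<and> y1 n t = real n / (k * real n)} \<noteq> {})
       \<and> ((\<lambda>n. recurrence_time (y1 n) (real n / (k * real n)) / ln (real n))
            \<longlonglongrightarrow> min (1 - \<beta>) \<alpha> / (f 0 0 - d1))"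
proof -
  obtain \<Phi> :: "real \<Rightarrow> real" where Phi: "\<forall>s t. 0 \<le> s \<longrightarrow> s \<le> t \<longrightarrow> \<Phi> t \<le> \<Phi> s"
      "\<forall>x y. x \<ge> 0 \<longrightarrow> y \<ge> 0 \<longrightarrow> f x y = \<Phi> (x + y)" using A3 by blast
  have fmax0: "f x y \<le> f 0 0" if "x \<ge> 0" "y \<ge> 0" for x y
  proof -
    have "f x y = \<Phi> (x+y)" "f 0 0 = \<Phi> 0" using Phi(2) that by auto
    moreover have "\<Phi> (x+y) \<le> \<Phi> 0" using Phi(1) that by auto
    ultimately show ?thesis by simp
  qed
  define lam where "lam = f 0 0 - d1"
  have lam_pos: "lam > 0" using A2a by (simp add: lam_def)
  define l0 where "l0 = r0 - d0"
  have l0: "l0 < 0" using lam0 by (simp add: l0_def)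
  define an where "an n = real n powr (- \<alpha>)" for n :: nat
  define bn where "bn n = real n powr \<beta> / (k * real n)" for n :: nat
  define Bn where "Bn n = bn n + an n / (k * lam)" for n
  define mg where "mg = exp(- d1) * min 1 (lam * exp l0) * exp(- lam - lam / (k * (- l0)) - 1)"
  define rg where "rg = lam * (k - 1) / (2 * k)"
  define Dg where "Dg = max 0 (ln (1/(k * mg)) / rg)"
  have lev: "real n / (k * real n) = 1/k" if "n \<ge> 1" for n :: nat using that k by simp
  have key: "{t. t>0 \<and> y1 n t = 1/k} \<noteq> {} \<and> ln(1/(k * Bn n))/lam \<le> Inf {t. t>0 \<and> y1 n t = 1/k}
      \<and> Inf {t. t>0 \<and> y1 n t = 1/k} \<le> ln(1/Bn n)/lam + Dg"
    if n: "n \<ge> 2" and c1: "1 \<le> ln(1/Bn n)/lam" and c2: "exp(l0 * (ln(1/Bn n)/lam)) \<le> (k-1)/2" for n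
  proof -
    have n1: "n \<ge> 1" "real n > 0" "real n \<ge> 2" using n by auto
    have S: "sys l0 d1 k lam (an n) (bn n) f (y0 n) (y1 n)"
    proof (rule sys.intro)
      show "l0 < 0" by (rule l0)
      show "d1 > 0" by (rule d1)
      show "k > 1" by (rule k)
      show "lam > 0" by (rule lam_pos)
      show "an n > 0" using n1 by (simp add: an_def)
      show "bn n > 0" using n1 k by (simp add: bn_def)
      show "bn n < 1/k"
      proof -
        have "real n powr \<beta> < real n powr 1" using n1 beta by (intro powr_less_mono) auto
        then have "real n powr \<beta> < real n" using n1 by simp
        then have "real n powr \<beta> / (k * real n) < real n / (k * real n)" using n1 k
          by (intro divide_strict_right_mono) auto
        then show ?thesis using n1 k by (simp add: bn_def)
      qed
      show "\<And>x y. x\<ge>0 \<Longrightarrow> y\<ge>0 \<Longrightarrow> f x y \<ge> 0" by (rule f_nonneg)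
      show "\<And>x y. x\<ge>0 \<Longrightarrow> y\<ge>0 \<Longrightarrow> f x y - d1 \<le> lam"
      proof -
        fix x y :: real assume "x\<ge>0" "y\<ge>0"
        from fmax0[OF this] show "f x y - d1 \<le> lam" unfolding lam_def by linarith
      qed
      show "\<And>x y. x\<ge>0 \<Longrightarrow> y\<ge>0 \<Longrightarrow> f x y - d1 \<ge> lam * (1-(x+y))"
      proof -
        fix x y :: real assume "x\<ge>0" "y\<ge>0"
        from A5[OF this] show "f x y - d1 \<ge> lam * (1-(x+y))" unfolding lam_def by linarith
      qed
      show "\<And>t. t\<ge>0 \<Longrightarrow> (y0 n has_real_derivative l0 * y0 n t) (at t within {0..})"
        using ode0 n1 by (simp add: l0_def)
      show "\<And>t. t\<ge>0 \<Longrightarrow> (y1 n has_real_derivative (f (y0 n t) (y1 n t) - d1) * y1 n t + an n * y0 n t) (at t within {0..})"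
        using ode1 n1 by (simp add: an_def)
      show "y0 n 0 = 1/k" using init0[OF n1(1)] lev[OF n1(1)] by simp
      show "y1 n 0 = bn n" using init1[OF n1(1)] by (simp add: bn_def)
    qed
    interpret s: sys l0 d1 k lam "an n" "bn n" f "y0 n" "y1 n" by (rule S)
    have BB: "s.B = Bn n" by (simp add: s.B_def Bn_def)
    have DD: "s.Dc = Dg" by (simp add: s.Dc_def s.m_def s.rho_def s.C_def Dg_def mg_def rg_def)
    show ?thesis using s.zeta_bounds c1 c2 unfolding BB DD by blast
  qed
  define \<mu> where "\<mu> = min (1 - \<beta>) \<alpha>"
  have mu: "\<mu> > 0" "\<mu> \<le> 1 - \<beta>" "\<mu> \<le> \<alpha>" "\<mu> = 1 - \<beta> \<or> \<mu> = \<alpha>" using alpha beta by (auto simp: \<mu>_def)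
  define clo where "clo = min (1/k) (1/(k * lam))"
  define chi where "chi = 1/k + 1/(k * lam)"
  have clo_pos: "clo > 0" using k lam_pos by (simp add: clo_def)
  have chi_pos: "chi > 0" using k lam_pos by (simp add: chi_def add_pos_pos)
  have Bbounds: "clo * real n powr (- \<mu>) \<le> Bn n \<and> Bn n \<le> chi * real n powr (- \<mu>)" if "n \<ge> 2" for n
  proof -
    have n: "real n \<ge> 1" "real n > 0" using that by auto
    have "real n powr (\<beta> - 1) = real n powr \<beta> / real n" using n by (simp add: powr_diff)
    then have bn_eq: "bn n = real n powr (\<beta> - 1) / k" using n k by (simp add: bn_def)
    have an_eq: "an n / (k * lam) = real n powr (- \<alpha>) / (k * lam)" by (simp add: an_def)
    have p1: "real n powr (\<beta> - 1) \<le> real n powr (- \<mu>)" using mu n by (intro powr_mono) auto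
    have p2: "real n powr (- \<alpha>) \<le> real n powr (- \<mu>)" using mu n by (intro powr_mono) auto
    have kl: "k * lam > 0" using k lam_pos by simp
    have up1: "real n powr (\<beta> - 1) / k \<le> real n powr (- \<mu>) / k" using p1 k by (intro divide_right_mono) auto
    have up2: "real n powr (- \<alpha>) / (k * lam) \<le> real n powr (- \<mu>) / (k * lam)" using p2 kl by (intro divide_right_mono) auto
    have "Bn n \<le> real n powr (- \<mu>) / k + real n powr (- \<mu>) / (k * lam)"
      unfolding Bn_def bn_eq an_eq using up1 up2 by linarith
    also have "\<dots> = chi * real n powr (- \<mu>)" by (simp add: chi_def algebra_simps)
    finally have upper: "Bn n \<le> chi * real n powr (- \<mu>)" .
    have t1: "real n powr (\<beta> - 1) / k \<ge> 0" using k by simp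
    have t2: "real n powr (- \<alpha>) / (k * lam) \<ge> 0" using kl by simp
    have "clo * real n powr (- \<mu>) \<le> Bn n"
    proof (cases "\<mu> = 1 - \<beta>")
      case True
      then have eqp: "real n powr (\<beta> - 1) = real n powr (- \<mu>)" by simp
      moreover have "clo * real n powr (- \<mu>) \<le> real n powr (- \<mu>) / k"
        using mult_right_mono[of clo "1/k" "real n powr (- \<mu>)"] by (simp add: clo_def)
      ultimately show ?thesis unfolding Bn_def bn_eq an_eq eqp using t2 by linarith
    next
      case False
      then have "\<mu> = \<alpha>" using mu by auto
      then have eqp: "real n powr (- \<alpha>) = real n powr (- \<mu>)" by simp
      moreover have "clo * real n powr (- \<mu>) \<le> real n powr (- \<mu>) / (k * lam)"
        using mult_right_mono[of clo "1/(k * lam)" "real n powr (- \<mu>)"] by (simp add: clo_def)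
      ultimately show ?thesis unfolding Bn_def bn_eq an_eq eqp using t1 by linarith
    qed
    then show ?thesis using upper by simp
  qed
  have lnB: "\<mu> * ln (real n) - ln chi \<le> ln (1 / Bn n) \<and> ln (1 / Bn n) \<le> \<mu> * ln (real n) - ln clo"
    if "n \<ge> 2" for n
  proof -
    have n: "real n > 0" using that by auto
    have pp: "real n powr (- \<mu>) > 0" using n by simp
    have Bp: "Bn n > 0" using Bbounds[OF that] clo_pos pp by (meson mult_pos_pos order_less_le_trans)
    have l1: "ln (Bn n) \<le> ln (chi * real n powr (- \<mu>))"
      using Bbounds[OF that] Bp chi_pos pp by (subst ln_le_cancel_iff) auto
    have l2: "ln (clo * real n powr (- \<mu>)) \<le> ln (Bn n)"
      using Bbounds[OF that] Bp clo_pos pp by (subst ln_le_cancel_iff) auto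
    have e1: "ln (chi * real n powr (- \<mu>)) = ln chi - \<mu> * ln (real n)"
      using chi_pos pp n by (simp add: ln_mult ln_powr)
    have e2: "ln (clo * real n powr (- \<mu>)) = ln clo - \<mu> * ln (real n)"
      using clo_pos pp n by (simp add: ln_mult ln_powr)
    have e3: "ln (1 / Bn n) = - ln (Bn n)" using Bp by (simp add: ln_div)
    show ?thesis using l1 l2 e1 e2 e3 by linarith
  qed
  define t0 where "t0 = ln ((k-1)/2) / l0"
  define Q where "Q = lam * max 1 t0"
  define K where "K = (Q + ln chi) / \<mu>"
  have lim: "filterlim (\<lambda>n. ln (real n)) at_top sequentially"
    by (rule filterlim_compose[OF ln_at_top filterlim_real_sequentially])
  have evK: "eventually (\<lambda>n. K \<le> ln (real n)) sequentially"
    using lim unfolding filterlim_at_top by blast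
  have ev2: "eventually (\<lambda>n. (2::nat) \<le> n) sequentially" by (rule eventually_ge_at_top)
  define good where "good n = (2 \<le> n \<and> K \<le> ln (real n))" for n :: nat
  have evg: "eventually good sequentially" unfolding good_def[abs_def] using eventually_conj[OF ev2 evK] by simp
  have goodkey: "{t. t>0 \<and> y1 n t = 1/k} \<noteq> {} \<and> ln(1/(k * Bn n))/lam \<le> Inf {t. t>0 \<and> y1 n t = 1/k}
      \<and> Inf {t. t>0 \<and> y1 n t = 1/k} \<le> ln(1/Bn n)/lam + Dg" if g: "good n" for n
  proof -
    have n2: "n \<ge> 2" and Kn: "K \<le> ln (real n)" using g by (auto simp: good_def)
    have "\<mu> * K \<le> \<mu> * ln (real n)" using Kn mu by (intro mult_left_mono) auto
    then have "Q + ln chi \<le> \<mu> * ln (real n)" using mu by (simp add: K_def)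
    then have QB: "Q \<le> ln (1 / Bn n)" using lnB[OF n2] by linarith
    have c1: "1 \<le> ln(1/Bn n)/lam"
    proof -
      have "lam * 1 \<le> Q" using lam_pos by (simp add: Q_def)
      then show ?thesis using QB lam_pos by (simp add: le_divide_eq)
    qed
    have c2: "exp(l0 * (ln(1/Bn n)/lam)) \<le> (k-1)/2"
    proof -
      have "lam * t0 \<le> Q" using lam_pos by (simp add: Q_def)
      then have "lam * t0 \<le> ln (1 / Bn n)" using QB by linarith
      then have "t0 \<le> ln(1/Bn n)/lam" using lam_pos by (simp add: le_divide_eq mult.commute)
      then have "l0 * (ln(1/Bn n)/lam) \<le> l0 * t0" by (rule mult_left_mono_neg) (use l0 in auto)
      also have "l0 * t0 = ln ((k-1)/2)" using l0 by (simp add: t0_def)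
      finally have "exp (l0 * (ln(1/Bn n)/lam)) \<le> exp (ln ((k-1)/2))" by simp
      also have "\<dots> = (k-1)/2" using k by simp
      finally show ?thesis .
    qed
    show ?thesis by (rule key[OF n2 c1 c2])
  qed
  have part1: "\<forall>\<^sub>F n in sequentially. {t. t > 0 \<and> y1 n t = real n / (k * real n)} \<noteq> {}"
    using evg
  proof (rule eventually_mono)
    fix n assume g: "good n"
    then have "n \<ge> 1" by (simp add: good_def)
    then show "{t. t > 0 \<and> y1 n t = real n / (k * real n)} \<noteq> {}" using goodkey[OF g] lev by simp
  qed
  define \<zeta> where "\<zeta> n = recurrence_time (y1 n) (real n / (k * real n))" for n
  define E1 where "E1 = (ln chi + ln k) / lam"
  define E2 where "E2 = Dg - ln clo / lam"
  have bounds: "\<mu> / lam - E1 / ln (real n) \<le> \<zeta> n / ln (real n) \<and> \<zeta> n / ln (real n) \<le> \<mu> / lam + E2 / ln (real n)"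
    if g: "good n" for n
  proof -
    have n2: "n \<ge> 2" using g by (simp add: good_def)
    have L: "ln (real n) > 0" using n2 by simp
    have z: "\<zeta> n = Inf {t. t>0 \<and> y1 n t = 1/k}" using n2 lev[of n] by (simp add: \<zeta>_def recurrence_time_def)
    have Bp: "Bn n > 0"
    proof -
      have "clo * real n powr (- \<mu>) > 0" using clo_pos n2 by simp
      then show ?thesis using Bbounds[OF n2] by linarith
    qed
    have lk: "ln (1/(k * Bn n)) = ln (1 / Bn n) - ln k" using Bp k by (simp add: ln_div ln_mult)
    have lo: "\<zeta> n \<ge> (\<mu> * ln (real n) - ln chi - ln k) / lam"
    proof -
      have "(\<mu> * ln (real n) - ln chi - ln k) / lam \<le> ln(1/(k * Bn n))/lam"
        using lnB[OF n2] lk lam_pos by (intro divide_right_mono) auto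
      then show ?thesis using goodkey[OF g] z by linarith
    qed
    have hi: "\<zeta> n \<le> (\<mu> * ln (real n) - ln clo) / lam + Dg"
    proof -
      have "ln(1/Bn n)/lam \<le> (\<mu> * ln (real n) - ln clo) / lam"
        using lnB[OF n2] lam_pos by (intro divide_right_mono) auto
      then show ?thesis using goodkey[OF g] z by linarith
    qed
    have eq1: "(\<mu> * ln (real n) - ln chi - ln k) / lam / ln (real n) = \<mu> / lam - E1 / ln (real n)"
      using L lam_pos by (simp add: E1_def field_simps)
    have eq2: "((\<mu> * ln (real n) - ln clo) / lam + Dg) / ln (real n) = \<mu> / lam + E2 / ln (real n)"
      using L lam_pos by (simp add: E2_def field_simps)
    have "(\<mu> * ln (real n) - ln chi - ln k) / lam / ln (real n) \<le> \<zeta> n / ln (real n)"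
      using lo L by (intro divide_right_mono) auto
    moreover have "\<zeta> n / ln (real n) \<le> ((\<mu> * ln (real n) - ln clo) / lam + Dg) / ln (real n)"
      using hi L by (intro divide_right_mono) auto
    ultimately show ?thesis unfolding eq1 eq2 by simp
  qed
  have inf: "filterlim (\<lambda>n. ln (real n)) at_infinity sequentially"
    by (rule filterlim_at_top_imp_at_infinity[OF lim])
  have limlo: "(\<lambda>n. \<mu> / lam - E1 / ln (real n)) \<longlonglongrightarrow> \<mu> / lam"
    using tendsto_diff[OF tendsto_const tendsto_divide_0[OF tendsto_const inf], of "\<mu> / lam" E1] by simp
  have limhi: "(\<lambda>n. \<mu> / lam + E2 / ln (real n)) \<longlonglongrightarrow> \<mu> / lam"
    using tendsto_add[OF tendsto_const tendsto_divide_0[OF tendsto_const inf], of "\<mu> / lam" E2] by simp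
  have part2: "(\<lambda>n. \<zeta> n / ln (real n)) \<longlonglongrightarrow> \<mu> / lam"
  proof (rule tendsto_sandwich[OF _ _ limlo limhi])
    show "\<forall>\<^sub>F n in sequentially. \<mu> / lam - E1 / ln (real n) \<le> \<zeta> n / ln (real n)"
      using evg by (rule eventually_mono) (use bounds in blast)
    show "\<forall>\<^sub>F n in sequentially. \<zeta> n / ln (real n) \<le> \<mu> / lam + E2 / ln (real n)"
      using evg by (rule eventually_mono) (use bounds in blast)
  qed
  have "\<mu> / lam = min (1 - \<beta>) \<alpha> / (f 0 0 - d1)" by (simp add: \<mu>_def lam_def)
  then show ?thesis using part1 part2 unfolding \<zeta>_def by simp
qed
end
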